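(* Let $(\Gamma,d)=(H,\iota,\sigma,m,d)$ be a $\mathbb{Z}/\overline m\mathbb{Z}$-graded Brauer graph and $H'\subseteq H$ stable under $\iota$. Let $\Gamma_d=(H_d,\iota_d,\sigma_d)$ be the Galois covering of $(\Gamma,d)$ and $H'_d=H'\times\mathbb{Z}/\overline m\mathbb{Z}\subseteq H_d$. Then the Galois covering of the graded Brauer graph $\mu^+_{H'}(\Gamma,d)$ is the Brauer graph $\mu^+_{H'_d}(\Gamma_d)$.
   Context: Brauer graph $\Gamma=(H,\iota,\sigma,m)$: $H$ finite, $\iota$ fixed-point-free involution, $\sigma$ a permutation, $m:H\to\mathbb{Z}_{>0}$ constant on $\sigma$-orbits; $\overline m=\mathrm{lcm}\{m(h)\}$. A grading $d:H\to\mathbb{Z}/\overline m\mathbb{Z}$ is admissible if for each $\sigma$-orbit $v$, $\sum_{h\in v}d(h)=\overline m/\widetilde m(v)$ with $\widetilde m(v)$ the value of $m$ on $v$; then $(\Gamma,d)$ is a graded Brauer graph. Its Galois covering is the Brauer graph (multiplicity identically $1$) $\Gamma_d$ with $H_d=H\times\mathbb{Z}/\overline m\mathbb{Z}$ (elements $h_i$), $\iota_d(h_i)=(\iota h)_i$, $\sigma_d(h_i)=(\sigma h)_{i+d(h)}$. Sectors: for $H'$ stable under $\iota$, $(h,r)\in H\times\mathbb{Z}_{\ge0}$ is a sector of elements of $H'$ if $r+1$ is the least $r'\ge0$ with $\sigma^{r'}h\notin H'$, maximal if also $\sigma^{-1}h\notin H'$. Ungraded move: $\mu^+_{(h,r)}(\Gamma)=(H,\iota,\sigma_{(h,r)},m_{(h,r)})$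 with $\sigma_{(h,r)}=(h\ \ \sigma^{r+1}h)\circ\sigma\circ(\sigma^rh\ \ \iota\sigma^{r+1}h)$ (applied right to left), $m_{(h,r)}(\sigma^ih)=m(\iota\sigma^{r+1}h)$ for $0\le i\le r$, $m_{(h,r)}=m$ otherwise. Graded move: $\mu^+_{(h,r)}(\Gamma,d)$ additionally carries $d_{(h,r)}$: $d_{(h,r)}(\iota\sigma^{r+1}h)=-\sum_{i=0}^rd(\sigma^ih)$; $d_{(h,r)}(\sigma^rh)=d(\iota\sigma^{r+1}h)+d(\sigma^rh)$ if $\iota\sigma^{r+1}h\neq\sigma^{-1}h$, else $\sum_{i=-1}^rd(\sigma^ih)+d(\sigma^rh)$; $d_{(h,r)}(\sigma^{-1}h)=\sum_{i=-1}^rd(\sigma^ih)$ if $\iota\sigma^{r+1}h\ne\sigma^{-1}h$, else $-\sum_{i=0}^rd(\sigma^ih)$; $d_{(h,r)}=d$ elsewhere; it is again admissible, with the same $\overline m$. The (graded) generalized Kauer move $\mu^+_{H'}$ is the succession of the (graded) moves of all maximal sectors of elements of $H'$ (independent of order). The Galois covering of $\mu^+_{H'}(\Gamma,d)=(H,\iota,\sigma_{H'},m_{H'},d_{H'})$ is formed with respect to $d_{H'}$. *)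

theory Defs
  imports Main "HOL-Combinatorics.Transposition"
begin

text \<open>A Brauer graph (H, iota, sigma, m). Half-edges live in a type 'a, the finite
  carrier is hes. Functions are only relevant on the carrier.\<close>

record 'a brauer =
  hes  :: "'a set"
  inv  :: "'a \<Rightarrow> 'a"
  perm :: "'a \<Rightarrow> 'a"
  mult :: "'a \<Rightarrow> nat"

definition brauer_graph :: "'a brauer \<Rightarrow> bool" where
  "brauer_graph G \<longleftrightarrow>
     finite (hes G) \<and>
     (\<forall>h\<in>hes G. inv G h \<in> hes G \<and> inv G h \<noteq> h \<and> inv G (inv G h) = h) \<and>
     bij_betw (perm G) (hes G) (hes G) \<and>
     (\<forall>h\<in>hes G. mult G h > 0 \<and> mult G (perm G h) = mult G h)"

definition mbar :: "'a brauer \<Rightarrow> nat" where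
  "mbar G = Lcm (mult G ` hes G)"

definition sorbit :: "'a brauer \<Rightarrow> 'a \<Rightarrow> 'a set" where
  "sorbit G h = {(perm G ^^ k) h | k. True}"

definition perm_inv :: "'a brauer \<Rightarrow> 'a \<Rightarrow> 'a" where
  "perm_inv G h = inv_into (hes G) (perm G) h"

text \<open>A grading d : H -> Z/(mbar)Z is represented by integer representatives;
  admissibility: for each sigma-orbit v, sum of d over v = mbar / m(v) modulo mbar.\<close>
definition admissible :: "'a brauer \<Rightarrow> ('a \<Rightarrow> int) \<Rightarrow> bool" where
  "admissible G d \<longleftrightarrow>
     (\<forall>h\<in>hes G. (\<Sum>x\<in>sorbit G h. d x) mod int (mbar G)
                 = int (mbar G div mult G h) mod int (mbar G))"

definition graded_brauer_graph :: "'a brauer \<Rightarrow> ('a \<Rightarrow> int) \<Rightarrow> bool" where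
  "graded_brauer_graph G d \<longleftrightarrow> brauer_graph G \<and> admissible G d"

text \<open>Galois covering: H_d = H x Z/mbar Z (representatives 0..mbar-1),
  iota_d(h_i) = (iota h)_i, sigma_d(h_i) = (sigma h)_{i + d h}, multiplicity 1.\<close>
definition covering :: "'a brauer \<Rightarrow> ('a \<Rightarrow> int) \<Rightarrow> ('a \<times> int) brauer" where
  "covering G d =
     \<lparr> hes = hes G \<times> {0..<int (mbar G)},
       inv = (\<lambda>(h, i). (inv G h, i)),
       perm = (\<lambda>(h, i). (perm G h, (i + d h) mod int (mbar G))),
       mult = (\<lambda>_. 1) \<rparr>"

definition iota_stable :: "'a brauer \<Rightarrow> 'a set \<Rightarrow> bool" where
  "iota_stable G H' \<longleftrightarrow> H' \<subseteq> hes G \<and> (\<forall>h\<in>H'. inv G h \<in> H')"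

definition is_sector :: "'a brauer \<Rightarrow> 'a set \<Rightarrow> 'a \<Rightarrow> nat \<Rightarrow> bool" where
  "is_sector G H' h r \<longleftrightarrow>
     h \<in> hes G \<and> (\<forall>i\<le>r. (perm G ^^ i) h \<in> H') \<and> (perm G ^^ (Suc r)) h \<notin> H'"

definition max_sector :: "'a brauer \<Rightarrow> 'a set \<Rightarrow> 'a \<Rightarrow> nat \<Rightarrow> bool" where
  "max_sector G H' h r \<longleftrightarrow> is_sector G H' h r \<and> perm_inv G h \<notin> H'"

definition max_sectors :: "'a brauer \<Rightarrow> 'a set \<Rightarrow> ('a \<times> nat) set" where
  "max_sectors G H' = {(h, r). max_sector G H' h r}"

definition move :: "'a brauer \<Rightarrow> 'a \<Rightarrow> nat \<Rightarrow> 'a brauer" where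
  "move G h r =
     (let s = perm G; t = inv G (((s ^^ Suc r)) h) in
      G\<lparr> perm := transpose h ((s ^^ Suc r) h) \<circ> s \<circ> transpose ((s ^^ r) h) t,
         mult := (\<lambda>x. if x \<in> {(s ^^ i) h | i. i \<le> r} then mult G t else mult G x) \<rparr>)"

definition move_grading :: "'a brauer \<Rightarrow> ('a \<Rightarrow> int) \<Rightarrow> 'a \<Rightarrow> nat \<Rightarrow> ('a \<Rightarrow> int)" where
  "move_grading G d h r =
     (let s = perm G; t = inv G ((s ^^ Suc r) h); p = perm_inv G h;
          S0 = (\<Sum>i\<le>r. d ((s ^^ i) h));
          S1 = d p + S0 in
      (\<lambda>x. if x = t then - S0
           else if x = (s ^^ r) h then
             (if t \<noteq> p then d t + d ((s ^^ r) h) else S1 + d ((s ^^ r) h))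
           else if x = p then (if t \<noteq> p then S1 else - S0)
           else d x))"

definition gmove :: "'a brauer \<times> ('a \<Rightarrow> int) \<Rightarrow> 'a \<times> nat \<Rightarrow> 'a brauer \<times> ('a \<Rightarrow> int)" where
  "gmove Gd hr = (move (fst Gd) (fst hr) (snd hr), move_grading (fst Gd) (snd Gd) (fst hr) (snd hr))"

fun moves :: "'a brauer \<Rightarrow> ('a \<times> nat) list \<Rightarrow> 'a brauer" where
  "moves G [] = G"
| "moves G ((h, r) # xs) = moves (move G h r) xs"

fun gmoves :: "'a brauer \<times> ('a \<Rightarrow> int) \<Rightarrow> ('a \<times> nat) list \<Rightarrow> 'a brauer \<times> ('a \<Rightarrow> int)" where
  "gmoves Gd [] = Gd"
| "gmoves Gd (hr # xs) = gmoves (gmove Gd hr) xs"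

definition brauer_eq :: "'a brauer \<Rightarrow> 'a brauer \<Rightarrow> bool" where
  "brauer_eq G1 G2 \<longleftrightarrow> hes G1 = hes G2 \<and>
     (\<forall>x\<in>hes G1. inv G1 x = inv G2 x \<and> perm G1 x = perm G2 x \<and> mult G1 x = mult G2 x)"

end

theory Submission
  imports Defs
begin


definition aa :: "'a brauer \<Rightarrow> 'a \<times> nat \<Rightarrow> 'a" where
  "aa G k = (perm G ^^ Suc (snd k)) (fst k)"
definition ee :: "'a brauer \<Rightarrow> 'a \<times> nat \<Rightarrow> 'a" where
  "ee G k = (perm G ^^ snd k) (fst k)"
definition tt :: "'a brauer \<Rightarrow> 'a \<times> nat \<Rightarrow> 'a" where
  "tt G k = inv G (aa G k)"
definition secset :: "'a brauer \<Rightarrow> 'a \<times> nat \<Rightarrow> 'a set" where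
  "secset G k = {(perm G ^^ i) (fst k) | i. i \<le> snd k}"

definition good_sec :: "'a brauer \<Rightarrow> 'a set \<Rightarrow> 'a \<times> nat \<Rightarrow> bool" where
  "good_sec G B k \<longleftrightarrow> fst k \<in> hes G \<and> (\<forall>i\<le>snd k. (perm G ^^ i) (fst k) \<in> B)
     \<and> aa G k \<notin> B \<and> tt G k \<notin> B \<and> (\<forall>x\<in>hes G. perm G x = fst k \<longrightarrow> x \<notin> B)"

definition graphish :: "'a brauer \<Rightarrow> bool" where
  "graphish G \<longleftrightarrow> bij_betw (perm G) (hes G) (hes G) \<and> (\<forall>x\<in>hes G. inv G x \<in> hes G \<and> inv G (inv G x) = x)"

definition fam :: "'a brauer \<Rightarrow> 'a set \<Rightarrow> ('a \<times> nat) set \<Rightarrow> bool" where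
  "fam G B S \<longleftrightarrow> graphish G \<and> (\<forall>k\<in>S. good_sec G B k)"

lemma graphish_closed: "graphish G \<Longrightarrow> x \<in> hes G \<Longrightarrow> perm G x \<in> hes G"
  unfolding graphish_def bij_betw_def by auto

lemma graphish_inv: "graphish G \<Longrightarrow> x \<in> hes G \<Longrightarrow> inv G x \<in> hes G"
  unfolding graphish_def by auto

lemma graphish_inj: "graphish G \<Longrightarrow> x \<in> hes G \<Longrightarrow> y \<in> hes G \<Longrightarrow> perm G x = perm G y \<Longrightarrow> x = y"
  unfolding graphish_def bij_betw_def inj_on_def by auto

lemma graphish_pow_closed: "graphish G \<Longrightarrow> x \<in> hes G \<Longrightarrow> (perm G ^^ i) x \<in> hes G"
  by (induction i) (auto simp: graphish_closed)

lemma graphish_pow_inj: "graphish G \<Longrightarrow> x \<in> hes G \<Longrightarrow> y \<in> hes G \<Longrightarrow> (perm G ^^ i) x = (perm G ^^ i) y \<Longrightarrow> x = y"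
proof (induction i)
  case 0 then show ?case by simp
next
  case (Suc i)
  have "(perm G ^^ i) x = (perm G ^^ i) y"
    using graphish_inj[OF Suc.prems(1) graphish_pow_closed[OF Suc.prems(1,2)] graphish_pow_closed[OF Suc.prems(1,3)]] Suc.prems(4) by simp
  then show ?case using Suc.IH Suc.prems by blast
qed

lemma U1_half:
  assumes F: "fam G B S" and k: "(h,r) \<in> S" and k': "(h',r') \<in> S"
    and i: "i \<le> r" and j: "j \<le> r'" and ij: "i \<le> j"
    and eq: "(perm G ^^ i) h = (perm G ^^ j) h'"
  shows "h = h' \<and> r = r' \<and> i = j"
proof -
  have g: "graphish G" and gk: "good_sec G B (h,r)" and gk': "good_sec G B (h',r')"
    using F k k' by (auto simp: fam_def)
  have hH: "h \<in> hes G" and h'H: "h' \<in> hes G" using gk gk' by (auto simp: good_sec_def)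
  have ieq: "i = j"
  proof (rule ccontr)
    assume "i \<noteq> j"
    then obtain m where m: "j = i + Suc m" using ij by (metis le_iff_add not0_implies_Suc add_0_right)
    have "(perm G ^^ j) h' = (perm G ^^ i) ((perm G ^^ Suc m) h')"
      by (simp only: m funpow_add comp_apply)
    then have "h = (perm G ^^ Suc m) h'"
      using graphish_pow_inj[OF g hH graphish_pow_closed[OF g h'H]] eq by metis
    then have "perm G ((perm G ^^ m) h') = h" by simp
    moreover have "(perm G ^^ m) h' \<in> B" using gk' j m by (auto simp: good_sec_def)
    moreover have "(perm G ^^ m) h' \<in> hes G" using graphish_pow_closed[OF g h'H] .
    ultimately show False using gk by (auto simp: good_sec_def)
  qed
  then have hh: "h = h'" using eq graphish_pow_inj[OF g hH h'H] by metis
  have "r = r'"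
  proof (rule ccontr)
    assume "r \<noteq> r'"
    then consider "r < r'" | "r' < r" by linarith
    then show False
    proof cases
      case 1
      have "\<forall>i\<le>r'. (perm G ^^ i) h' \<in> B" using gk' by (simp add: good_sec_def)
      then have "(perm G ^^ Suc r) h' \<in> B" using 1 by (simp del: funpow.simps)
      then show False using gk hh by (auto simp: good_sec_def aa_def)
    next
      case 2
      have "\<forall>i\<le>r. (perm G ^^ i) h \<in> B" using gk by (simp add: good_sec_def)
      then have "(perm G ^^ Suc r') h \<in> B" using 2 by (simp del: funpow.simps)
      then show False using gk' hh by (auto simp: good_sec_def aa_def)
    qed
  qed
  then show ?thesis using hh ieq by simp
qed

lemma U1:
  assumes F: "fam G B S" and k: "k \<in> S" and k': "k' \<in> S"
    and i: "i \<le> snd k" and j: "j \<le> snd k'"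
    and eq: "(perm G ^^ i) (fst k) = (perm G ^^ j) (fst k')"
  shows "k = k' \<and> i = j"
proof (cases "i \<le> j")
  case True then show ?thesis using U1_half[OF F, of "fst k" "snd k" "fst k'" "snd k'" i j] assms
    by (auto simp: prod_eq_iff)
next
  case False then show ?thesis using U1_half[OF F, of "fst k'" "snd k'" "fst k" "snd k" j i] assms
    by (auto simp: prod_eq_iff)
qed

lemma start_uniq: "fam G B S \<Longrightarrow> k \<in> S \<Longrightarrow> k' \<in> S \<Longrightarrow> fst k = fst k' \<Longrightarrow> k = k'"
  using U1[of G B S k k' 0 0] by auto

lemma ee_uniq: "fam G B S \<Longrightarrow> k \<in> S \<Longrightarrow> k' \<in> S \<Longrightarrow> ee G k = ee G k' \<Longrightarrow> k = k'"
  using U1[of G B S k k' "snd k" "snd k'"] by (auto simp: ee_def)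

lemma fam_hH: "fam G B S \<Longrightarrow> k \<in> S \<Longrightarrow> fst k \<in> hes G"
  by (auto simp: fam_def good_sec_def)

lemma fam_g: "fam G B S \<Longrightarrow> graphish G"
  by (auto simp: fam_def)

lemma ee_H: "fam G B S \<Longrightarrow> k \<in> S \<Longrightarrow> ee G k \<in> hes G"
  unfolding ee_def by (rule graphish_pow_closed[OF fam_g fam_hH])

lemma aa_uniq: "fam G B S \<Longrightarrow> k \<in> S \<Longrightarrow> k' \<in> S \<Longrightarrow> aa G k = aa G k' \<Longrightarrow> k = k'"
proof -
  assume F: "fam G B S" and k: "k \<in> S" and k': "k' \<in> S" and e: "aa G k = aa G k'"
  have "ee G k = ee G k'"
    using graphish_inj[OF fam_g[OF F] ee_H[OF F k] ee_H[OF F k']] e by (simp add: aa_def ee_def)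
  then show ?thesis using ee_uniq[OF F k k'] by blast
qed

lemma graphish_invinv: "graphish G \<Longrightarrow> x \<in> hes G \<Longrightarrow> inv G (inv G x) = x"
  unfolding graphish_def by auto

lemma aa_H: "fam G B S \<Longrightarrow> k \<in> S \<Longrightarrow> aa G k \<in> hes G"
  unfolding aa_def by (rule graphish_pow_closed[OF fam_g fam_hH])

lemma tt_H: "fam G B S \<Longrightarrow> k \<in> S \<Longrightarrow> tt G k \<in> hes G"
  unfolding tt_def by (rule graphish_inv[OF fam_g aa_H])

lemma tt_uniq:
  assumes "fam G B S" "k \<in> S" "k' \<in> S" "tt G k = tt G k'"
  shows "k = k'"
proof -
  have g: "graphish G" using assms fam_g by blast
  have "aa G k = aa G k'"
    using assms(4) graphish_invinv[OF g aa_H[OF assms(1,2)]] graphish_invinv[OF g aa_H[OF assms(1,3)]]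
    unfolding tt_def by metis
  then show ?thesis using aa_uniq assms by blast
qed

lemma fam_gs: "fam G B S \<Longrightarrow> k \<in> S \<Longrightarrow> good_sec G B k"
  unfolding fam_def by blast
lemma sec_B: "fam G B S \<Longrightarrow> k \<in> S \<Longrightarrow> i \<le> snd k \<Longrightarrow> (perm G ^^ i) (fst k) \<in> B"
  using fam_gs unfolding good_sec_def by blast
lemma ee_B: "fam G B S \<Longrightarrow> k \<in> S \<Longrightarrow> ee G k \<in> B"
  unfolding ee_def by (rule sec_B) auto
lemma start_B: "fam G B S \<Longrightarrow> k \<in> S \<Longrightarrow> fst k \<in> B"
  using sec_B[of G B S k 0] by simp
lemma aa_nB: "fam G B S \<Longrightarrow> k \<in> S \<Longrightarrow> aa G k \<notin> B"
  using fam_gs unfolding good_sec_def by blast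
lemma tt_nB: "fam G B S \<Longrightarrow> k \<in> S \<Longrightarrow> tt G k \<notin> B"
  using fam_gs unfolding good_sec_def by blast
lemma pre_nB: "fam G B S \<Longrightarrow> k \<in> S \<Longrightarrow> x \<in> hes G \<Longrightarrow> perm G x = fst k \<Longrightarrow> x \<notin> B"
  using fam_gs unfolding good_sec_def by blast
lemma fam_mono: "fam G B S \<Longrightarrow> S' \<subseteq> S \<Longrightarrow> fam G B S'"
  by (auto simp: fam_def)

definition cs :: "'a brauer \<Rightarrow> ('a \<times> nat) set \<Rightarrow> 'a \<Rightarrow> 'a" where
  "cs G S y = (if \<exists>k\<in>S. y = fst k then aa G (SOME k. k \<in> S \<and> y = fst k) else y)"

definition cf :: "'a brauer \<Rightarrow> ('a \<times> nat) set \<Rightarrow> 'a \<Rightarrow> 'a" where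
  "cf G S x = (if \<exists>k\<in>S. x = tt G k then fst (SOME k. k \<in> S \<and> x = tt G k)
     else cs G S (perm G (if \<exists>k\<in>S. x = ee G k then tt G (SOME k. k \<in> S \<and> x = ee G k) else x)))"

lemma some_uniq: "k \<in> S \<Longrightarrow> P k \<Longrightarrow> (\<And>k'. k' \<in> S \<Longrightarrow> P k' \<Longrightarrow> k' = k) \<Longrightarrow> (SOME k. k \<in> S \<and> P k) = k"
  by (rule some_equality) blast+

lemma cs_start: "fam G B S \<Longrightarrow> k \<in> S \<Longrightarrow> cs G S (fst k) = aa G k"
proof -
  assume F: "fam G B S" and k: "k \<in> S"
  have "(SOME k'. k' \<in> S \<and> fst k = fst k') = k"
    by (rule some_uniq[OF k], simp, rule start_uniq[OF F _ k], simp_all)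
  then show ?thesis unfolding cs_def using k by auto
qed

lemma cs_other: "\<not> (\<exists>k\<in>S. y = fst k) \<Longrightarrow> cs G S y = y"
  unfolding cs_def by auto

lemma cf_T: "fam G B S \<Longrightarrow> k \<in> S \<Longrightarrow> cf G S (tt G k) = fst k"
proof -
  assume F: "fam G B S" and k: "k \<in> S"
  have "(SOME k'. k' \<in> S \<and> tt G k = tt G k') = k"
    by (rule some_uniq[OF k], simp, rule tt_uniq[OF F _ k], simp_all)
  then show ?thesis unfolding cf_def using k by auto
qed

lemma cf_E: "fam G B S \<Longrightarrow> k \<in> S \<Longrightarrow> cf G S (ee G k) = cs G S (perm G (tt G k))"
proof -
  assume F: "fam G B S" and k: "k \<in> S"
  have "\<not> (\<exists>k'\<in>S. ee G k = tt G k')" using ee_B[OF F k] tt_nB[OF F] by force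
  moreover have "(SOME k'. k' \<in> S \<and> ee G k = ee G k') = k"
    by (rule some_uniq[OF k], simp, rule ee_uniq[OF F _ k], simp_all)
  ultimately show ?thesis unfolding cf_def using k by auto
qed

lemma cf_O: "\<not> (\<exists>k\<in>S. x = tt G k) \<Longrightarrow> \<not> (\<exists>k\<in>S. x = ee G k) \<Longrightarrow> cf G S x = cs G S (perm G x)"
  unfolding cf_def by (simp only: if_False)


lemma L_swap:
  assumes F: "fam G B (insert k S0)" and kn: "k \<notin> S0" and ya: "y \<noteq> aa G k"
  shows "transpose (fst k) (aa G k) (cs G S0 y) = cs G (insert k S0) y"
proof -
  have F0: "fam G B S0" using fam_mono[OF F] by blast
  have kS: "k \<in> insert k S0" by simp
  show ?thesis
  proof (cases "\<exists>k'\<in>S0. y = fst k'")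
    case True
    then obtain k' where k': "k' \<in> S0" and y: "y = fst k'" by blast
    have k'S: "k' \<in> insert k S0" using k' by simp
    have 1: "cs G S0 y = aa G k'" using cs_start[OF F0 k'] y by simp
    have 2: "cs G (insert k S0) y = aa G k'" using cs_start[OF F k'S] y by simp
    have "aa G k' \<noteq> fst k" using aa_nB[OF F k'S] start_B[OF F kS] by metis
    moreover have "aa G k' \<noteq> aa G k" using aa_uniq[OF F k'S kS] k' kn by metis
    ultimately show ?thesis using 1 2 by simp
  next
    case False
    then have 1: "cs G S0 y = y" by (rule cs_other)
    show ?thesis
    proof (cases "y = fst k")
      case True
      then show ?thesis using 1 cs_start[OF F kS] by simp
    next
      case False2: False
      then have "\<not> (\<exists>k'\<in>insert k S0. y = fst k')" using False by auto
      then have "cs G (insert k S0) y = y" by (rule cs_other)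
      then show ?thesis using 1 False2 ya by simp
    qed
  qed
qed

lemma step_sp:
  assumes F: "fam G B (insert k S0)" and kn: "k \<notin> S0"
    and IH: "\<forall>x\<in>hes G. s' x = cf G S0 x"
  shows "i \<le> Suc (snd k) \<Longrightarrow> (s' ^^ i) (fst k) = (perm G ^^ i) (fst k)"
proof (induction i)
  case 0 then show ?case by simp
next
  case (Suc i)
  have F0: "fam G B S0" using fam_mono[OF F] by blast
  have kS: "k \<in> insert k S0" by simp
  have g: "graphish G" using fam_g[OF F] .
  have iH: "(perm G ^^ i) (fst k) \<in> hes G" using graphish_pow_closed[OF g fam_hH[OF F kS]] .
  have ir: "i \<le> snd k" using Suc.prems by simp
  have iB: "(perm G ^^ i) (fst k) \<in> B" using sec_B[OF F kS ir] .
  have nT: "\<not> (\<exists>k'\<in>S0. (perm G ^^ i) (fst k) = tt G k')"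
    using iB tt_nB[OF F0] by force
  have nE: "\<not> (\<exists>k'\<in>S0. (perm G ^^ i) (fst k) = ee G k')"
  proof
    assume "\<exists>k'\<in>S0. (perm G ^^ i) (fst k) = ee G k'"
    then obtain k' where k': "k' \<in> S0" "(perm G ^^ i) (fst k) = (perm G ^^ snd k') (fst k')"
      unfolding ee_def by blast
    then have "k = k'" using U1[OF F kS _ ir, of k' "snd k'"] by auto
    then show False using k' kn by simp
  qed
  have nS: "\<not> (\<exists>k'\<in>S0. (perm G ^^ Suc i) (fst k) = fst k')"
  proof
    assume "\<exists>k'\<in>S0. (perm G ^^ Suc i) (fst k) = fst k'"
    then obtain k' where k': "k' \<in> S0" "(perm G ^^ Suc i) (fst k) = (perm G ^^ 0) (fst k')"
      by auto
    have k'S: "k' \<in> insert k S0" using k' by simp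
    show False
    proof (cases "Suc i \<le> snd k")
      case True
      then have "k = k'" using U1[OF F kS k'S True, of 0] k' by auto
      then show False using k' kn by simp
    next
      case False
      then have "Suc i = Suc (snd k)" using Suc.prems by simp
      then have "aa G k = fst k'" using k' by (simp add: aa_def del: funpow.simps)
      then show False using aa_nB[OF F kS] start_B[OF F k'S] by metis
    qed
  qed
  have "(s' ^^ Suc i) (fst k) = s' ((perm G ^^ i) (fst k))"
    using Suc.IH Suc.prems by simp
  also have "\<dots> = cf G S0 ((perm G ^^ i) (fst k))" using IH iH by blast
  also have "\<dots> = cs G S0 ((perm G ^^ Suc i) (fst k))" using cf_O[OF nT nE] by simp
  also have "\<dots> = (perm G ^^ Suc i) (fst k)" using cs_other[OF nS] .
  finally show ?case .
qed

lemma step_cf: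
  assumes F: "fam G B (insert k S0)" and kn: "k \<notin> S0"
    and IH: "\<forall>x\<in>hes G. s' x = cf G S0 x" and x: "x \<in> hes G"
  shows "(transpose (fst k) (aa G k) \<circ> s' \<circ> transpose (ee G k) (tt G k)) x = cf G (insert k S0) x"
proof -
  have F0: "fam G B S0" using fam_mono[OF F] by blast
  have kS: "k \<in> insert k S0" by simp
  have g: "graphish G" using fam_g[OF F] .
  have eH: "ee G k \<in> hes G" using ee_H[OF F kS] .
  have tH: "tt G k \<in> hes G" using tt_H[OF F kS] .
  have se: "perm G (ee G k) = aa G k" by (simp add: aa_def ee_def)
  have et: "ee G k \<noteq> tt G k" using ee_B[OF F kS] tt_nB[OF F kS] by metis
  have inS0: "k' \<in> S0 \<Longrightarrow> k' \<in> insert k S0 \<and> k' \<noteq> k" for k' using kn by auto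
  show ?thesis
  proof (cases "x = tt G k")
    case True
    have nT: "\<not> (\<exists>k'\<in>S0. ee G k = tt G k')" using ee_B[OF F kS] tt_nB[OF F0] by force
    have nE: "\<not> (\<exists>k'\<in>S0. ee G k = ee G k')" using ee_uniq[OF F kS] inS0 by metis
    have nS: "\<not> (\<exists>k'\<in>S0. aa G k = fst k')" using aa_nB[OF F kS] start_B[OF F0] by metis
    have "s' (ee G k) = aa G k" using IH eH cf_O[OF nT nE] se cs_other[OF nS] by simp
    then show ?thesis using True cf_T[OF F kS] by simp
  next
    case xt: False
    show ?thesis
    proof (cases "x = ee G k")
      case True
      have nT: "\<not> (\<exists>k'\<in>S0. tt G k = tt G k')" using tt_uniq[OF F kS] inS0 by metis
      have nE: "\<not> (\<exists>k'\<in>S0. tt G k = ee G k')" using tt_nB[OF F kS] ee_B[OF F0] by metis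
      have ya: "perm G (tt G k) \<noteq> aa G k"
        using graphish_inj[OF g tH eH] se et by metis
      have "s' (tt G k) = cs G S0 (perm G (tt G k))" using IH tH cf_O[OF nT nE] by simp
      then show ?thesis using True L_swap[OF F kn ya] cf_E[OF F kS] by simp
    next
      case xe: False
      have tr: "transpose (ee G k) (tt G k) x = x" using xt xe by simp
      have ya: "perm G x \<noteq> aa G k" using graphish_inj[OF g x eH] se xe by metis
      show ?thesis
      proof (cases "\<exists>k'\<in>S0. x = tt G k'")
        case True
        then obtain k' where k': "k' \<in> S0" "x = tt G k'" by blast
        have k'S: "k' \<in> insert k S0" using k' by simp
        have "fst k' \<noteq> fst k" using start_uniq[OF F k'S kS] k' kn by metis
        moreover have "fst k' \<noteq> aa G k" using aa_nB[OF F kS] start_B[OF F k'S] by metis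
        ultimately show ?thesis using tr IH x cf_T[OF F0 k'(1)] cf_T[OF F k'S] k'(2) by simp
      next
        case nT: False
        show ?thesis
        proof (cases "\<exists>k'\<in>S0. x = ee G k'")
          case True
          then obtain k' where k': "k' \<in> S0" "x = ee G k'" by blast
          have k'S: "k' \<in> insert k S0" using k' by simp
          have ya': "perm G (tt G k') \<noteq> aa G k"
            using graphish_inj[OF g tt_H[OF F k'S] eH] se tt_nB[OF F k'S] ee_B[OF F kS] by metis
          show ?thesis using tr IH x cf_E[OF F0 k'(1)] cf_E[OF F k'S] k'(2) L_swap[OF F kn ya'] by simp
        next
          case nE: False
          have nT': "\<not> (\<exists>k'\<in>insert k S0. x = tt G k')" using nT xt by auto
          have nE': "\<not> (\<exists>k'\<in>insert k S0. x = ee G k')" using nE xe by auto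
          show ?thesis using tr IH x cf_O[OF nT nE] cf_O[OF nT' nE'] L_swap[OF F kn ya] by simp
        qed
      qed
    qed
  qed
qed


lemma move_hes[simp]: "hes (move G h r) = hes G"
  and move_inv[simp]: "inv (move G h r) = inv G"
  and move_perm: "perm (move G h r) = transpose h ((perm G ^^ Suc r) h) \<circ> perm G \<circ>
      transpose ((perm G ^^ r) h) (inv G ((perm G ^^ Suc r) h))"
  and move_mult: "mult (move G h r) = (\<lambda>x. if x \<in> {(perm G ^^ i) h | i. i \<le> r}
      then mult G (inv G ((perm G ^^ Suc r) h)) else mult G x)"
  by (simp_all add: move_def Let_def del: funpow.simps)

lemma moves_append: "moves G (xs @ ys) = moves (moves G xs) ys"
  by (induction G xs rule: moves.induct) auto

lemma moves_snoc: "moves G (xs @ [k]) = move (moves G xs) (fst k) (snd k)"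
  by (cases k) (simp add: moves_append)

lemma moves_hes[simp]: "hes (moves G xs) = hes G"
  and moves_inv[simp]: "inv (moves G xs) = inv G"
  by (induction G xs rule: moves.induct) auto

lemma moves_cf:
  "fam G B (set xs) \<Longrightarrow> distinct xs \<Longrightarrow> \<forall>x\<in>hes G. perm (moves G xs) x = cf G (set xs) x"
proof (induction xs rule: rev_induct)
  case Nil
  then show ?case by (simp add: cf_def cs_def)
next
  case (snoc k xs)
  have F: "fam G B (insert k (set xs))" using snoc.prems by simp
  have kn: "k \<notin> set xs" using snoc.prems by simp
  have IH: "\<forall>x\<in>hes G. perm (moves G xs) x = cf G (set xs) x"
    using snoc.IH fam_mono[OF F] snoc.prems by auto
  have sp: "\<And>i. i \<le> Suc (snd k) \<Longrightarrow> (perm (moves G xs) ^^ i) (fst k) = (perm G ^^ i) (fst k)"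
    using step_sp[OF F kn IH] by blast
  have a: "(perm (moves G xs) ^^ Suc (snd k)) (fst k) = aa G k" using sp[of "Suc (snd k)"] by (simp add: aa_def del: funpow.simps)
  have e: "(perm (moves G xs) ^^ (snd k)) (fst k) = ee G k" using sp[of "snd k"] by (simp add: ee_def)
  have "perm (moves G (xs @ [k])) = transpose (fst k) (aa G k) \<circ> perm (moves G xs) \<circ> transpose (ee G k) (tt G k)"
    unfolding moves_snoc move_perm a e by (simp add: tt_def)
  then show ?case using step_cf[OF F kn IH] by simp
qed


lemma secset_B: "fam G B S \<Longrightarrow> k \<in> S \<Longrightarrow> secset G k \<subseteq> B"
  unfolding secset_def using sec_B by blast

lemma moves_mult:
  "fam G B (set xs) \<Longrightarrow> distinct xs \<Longrightarrow>
    (\<forall>x\<in>hes G. mult (moves G xs) x \<in> mult G ` hes G) \<and>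
    (\<forall>x\<in>hes G. x \<notin> (\<Union>k\<in>set xs. secset G k) \<longrightarrow> mult (moves G xs) x = mult G x)"
proof (induction xs rule: rev_induct)
  case Nil
  then show ?case by simp
next
  case (snoc k xs)
  have F: "fam G B (insert k (set xs))" using snoc.prems by simp
  have kn: "k \<notin> set xs" using snoc.prems by simp
  have IH0: "\<forall>x\<in>hes G. perm (moves G xs) x = cf G (set xs) x"
    using moves_cf fam_mono[OF F] snoc.prems by auto
  have IH: "(\<forall>x\<in>hes G. mult (moves G xs) x \<in> mult G ` hes G) \<and>
    (\<forall>x\<in>hes G. x \<notin> (\<Union>k\<in>set xs. secset G k) \<longrightarrow> mult (moves G xs) x = mult G x)"
    using snoc.IH fam_mono[OF F] snoc.prems by auto
  have sp: "\<And>i. i \<le> Suc (snd k) \<Longrightarrow> (perm (moves G xs) ^^ i) (fst k) = (perm G ^^ i) (fst k)"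
    using step_sp[OF F kn IH0] by blast
  have a: "(perm (moves G xs) ^^ Suc (snd k)) (fst k) = aa G k" using sp[of "Suc (snd k)"] by (simp add: aa_def del: funpow.simps)
  have sp2: "\<And>i. i \<le> snd k \<Longrightarrow> (perm (moves G xs) ^^ i) (fst k) = (perm G ^^ i) (fst k)"
    using sp by simp
  have ss: "{(perm (moves G xs) ^^ i) (fst k) | i. i \<le> snd k} = secset G k"
  proof -
    have "\<And>x. (\<exists>i. x = (perm (moves G xs) ^^ i) (fst k) \<and> i \<le> snd k) \<longleftrightarrow> (\<exists>i. x = (perm G ^^ i) (fst k) \<and> i \<le> snd k)"
      using sp2 by metis
    then show ?thesis unfolding secset_def by blast
  qed
  have tH: "tt G k \<in> hes G" using tt_H[OF F] by simp
  have tI: "brauer.inv (moves G xs) (aa G k) = tt G k" by (simp add: tt_def)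
  have m: "mult (moves G (xs @ [k])) = (\<lambda>x. if x \<in> secset G k then mult (moves G xs) (tt G k) else mult (moves G xs) x)"
    unfolding moves_snoc move_mult a ss by (simp only: moves_inv tt_def)
  show ?case using IH tH unfolding m by auto
qed

lemma mult_pow: "brauer_graph G \<Longrightarrow> h \<in> hes G \<Longrightarrow> mult G ((perm G ^^ i) h) = mult G h"
proof (induction i)
  case 0 then show ?case by simp
next
  case (Suc i)
  have "(perm G ^^ i) h \<in> hes G"
    using Suc.prems by (induction i) (auto simp: brauer_graph_def bij_betw_def)
  then show ?case using Suc by (auto simp: brauer_graph_def)
qed

lemma brauer_graphish: "brauer_graph G \<Longrightarrow> graphish G"
  unfolding brauer_graph_def graphish_def by blast

lemma moves_mbar:
  assumes bg: "brauer_graph G" and F: "fam G B (set xs)" and dx: "distinct xs"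
  shows "mbar (moves G xs) = mbar G"
proof -
  note M = moves_mult[OF F dx]
  let ?A = "\<Union>k\<in>set xs. secset G k"
  have AB: "?A \<subseteq> B" using secset_B[OF F] by blast
  have "mult (moves G xs) ` hes G = mult G ` hes G"
  proof
    show "mult (moves G xs) ` hes G \<subseteq> mult G ` hes G" using M by blast
  next
    show "mult G ` hes G \<subseteq> mult (moves G xs) ` hes G"
    proof
      fix v assume "v \<in> mult G ` hes G"
      then obtain y where y: "y \<in> hes G" "v = mult G y" by blast
      show "v \<in> mult (moves G xs) ` hes G"
      proof (cases "y \<in> ?A")
        case False
        then show ?thesis using M y by force
      next
        case True
        then obtain k i where k: "k \<in> set xs" "i \<le> snd k" "y = (perm G ^^ i) (fst k)"
          unfolding secset_def by blast
        have hH: "fst k \<in> hes G" using fam_hH[OF F k(1)] .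
        have "mult G y = mult G (aa G k)"
          using mult_pow[OF bg hH, of i] mult_pow[OF bg hH, of "Suc (snd k)"] k(3)
          by (simp add: aa_def del: funpow.simps)
        moreover have "aa G k \<notin> ?A" using aa_nB[OF F k(1)] AB by blast
        moreover have "aa G k \<in> hes G" using aa_H[OF F k(1)] .
        ultimately show ?thesis using M y by force
      qed
    qed
  qed
  then show ?thesis unfolding mbar_def by (simp del: moves_hes add: moves_hes)
qed

definition cov :: "nat \<Rightarrow> 'a brauer \<Rightarrow> ('a \<Rightarrow> int) \<Rightarrow> ('a \<times> int) brauer" where
  "cov M G d = \<lparr> hes = hes G \<times> {0..<int M}, inv = (\<lambda>(h, i). (inv G h, i)),
       perm = (\<lambda>(h, i). (perm G h, (i + d h) mod int M)), mult = (\<lambda>_. 1) \<rparr>"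

lemma covering_cov: "covering G d = cov (mbar G) G d"
  by (simp add: covering_def cov_def)

lemma cov_simps[simp]: "hes (cov M G d) = hes G \<times> {0..<int M}"
  "inv (cov M G d) (h, i) = (inv G h, i)"
  "perm (cov M G d) (h, i) = (perm G h, (i + d h) mod int M)"
  "mult (cov M G d) = (\<lambda>_. 1)"
  by (simp_all add: cov_def)

lemma sp_cov: "0 \<le> j \<Longrightarrow> j < int M \<Longrightarrow> (perm (cov M G d) ^^ i) (h, j) = ((perm G ^^ i) h, (j + (\<Sum>l<i. d ((perm G ^^ l) h))) mod int M)"
proof (induction i)
  case 0 then show ?case by simp
next
  case (Suc i)
  then show ?case by (simp add: mod_add_left_eq add.assoc)
qed

lemma graphish_cov:
  assumes g: "graphish G" and M: "M > 0"
  shows "graphish (cov M G d)"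
proof -
  have inj: "inj_on (perm (cov M G d)) (hes (cov M G d))"
  proof (rule inj_onI)
    fix x y assume x: "x \<in> hes (cov M G d)" and y: "y \<in> hes (cov M G d)"
      and e: "perm (cov M G d) x = perm (cov M G d) y"
    obtain a i where xa: "x = (a, i)" by (cases x) blast
    obtain b j where yb: "y = (b, j)" by (cases y) blast
    have aH: "a \<in> hes G" and i: "0 \<le> i" "i < int M" using x xa by auto
    have bH: "b \<in> hes G" and j: "0 \<le> j" "j < int M" using y yb by auto
    have e1: "perm G a = perm G b" and e2: "(i + d a) mod int M = (j + d b) mod int M"
      using e by (simp_all add: xa yb)
    have ab: "a = b" using graphish_inj[OF g aH bH e1] .
    have "((i + d a) mod int M - d a) mod int M = ((j + d a) mod int M - d a) mod int M"
      using e2 ab by simp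
    then have "i mod int M = j mod int M" by (simp only: mod_diff_left_eq add_diff_cancel_right')
    then have "i = j" using i j by (simp only: mod_pos_pos_trivial)
    then show "x = y" using ab xa yb by simp
  qed
  have surj: "perm (cov M G d) ` hes (cov M G d) = hes (cov M G d)"
  proof
    show "perm (cov M G d) ` hes (cov M G d) \<subseteq> hes (cov M G d)"
    proof
      fix z assume "z \<in> perm (cov M G d) ` hes (cov M G d)"
      then obtain x where x: "x \<in> hes (cov M G d)" "z = perm (cov M G d) x" by blast
      obtain a i where xa: "x = (a, i)" by (cases x) blast
      have aH: "a \<in> hes G" using x xa by auto
      have "perm G a \<in> hes G" using graphish_closed[OF g aH] .
      moreover have "0 \<le> (i + d a) mod int M" "(i + d a) mod int M < int M" using M by simp_all
      ultimately show "z \<in> hes (cov M G d)" using x xa by simp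
    qed
  next
    show "hes (cov M G d) \<subseteq> perm (cov M G d) ` hes (cov M G d)"
    proof
      fix z assume z: "z \<in> hes (cov M G d)"
      obtain b j where zb: "z = (b, j)" by (cases z) blast
      have bH: "b \<in> hes G" and j: "0 \<le> j" "j < int M" using z zb by auto
      have "b \<in> perm G ` hes G" using g bH unfolding graphish_def bij_betw_def by simp
      then obtain a where a: "a \<in> hes G" "perm G a = b" by blast
      have "((j - d a) mod int M + d a) mod int M = (j - d a + d a) mod int M"
        by (simp only: mod_add_left_eq)
      also have "\<dots> = j" using j by simp
      finally have "perm (cov M G d) (a, (j - d a) mod int M) = (b, j)"
        using a by simp
      moreover have "(a, (j - d a) mod int M) \<in> hes (cov M G d)" using a M by simp
      ultimately show "z \<in> perm (cov M G d) ` hes (cov M G d)" using zb by (metis image_eqI)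
    qed
  qed
  have iv: "\<forall>x\<in>hes (cov M G d). inv (cov M G d) x \<in> hes (cov M G d) \<and> inv (cov M G d) (inv (cov M G d) x) = x"
  proof
    fix x assume x: "x \<in> hes (cov M G d)"
    obtain a i where xa: "x = (a, i)" by (cases x) blast
    have aH: "a \<in> hes G" using x xa by auto
    show "inv (cov M G d) x \<in> hes (cov M G d) \<and> inv (cov M G d) (inv (cov M G d) x) = x"
      using x graphish_inv[OF g aH] graphish_invinv[OF g aH] by (simp add: xa)
  qed
  show ?thesis using inj surj iv unfolding graphish_def bij_betw_def by blast
qed


definition lifts :: "nat \<Rightarrow> 'a \<times> nat \<Rightarrow> (('a \<times> int) \<times> nat) list" where
  "lifts M k = map (\<lambda>j. ((fst k, j), snd k)) [0..int M - 1]"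

lemma set_lifts: "set (lifts M k) = {((fst k, j), snd k) | j. 0 \<le> j \<and> j < int M}"
  unfolding lifts_def by auto

lemma distinct_lifts: "distinct (lifts M k)"
  unfolding lifts_def by (simp add: distinct_map inj_on_def)

lemma moves_mult1: "mult G = (\<lambda>_. 1) \<Longrightarrow> mult (moves G ys) = (\<lambda>_. 1)"
proof (induction ys arbitrary: G)
  case Nil then show ?case by simp
next
  case (Cons k ys)
  obtain h r where k: "k = (h, r)" by (cases k) blast
  have m1: "\<And>x. mult G x = 1" using Cons.prems by simp
  have "mult (move G h r) = (\<lambda>_. 1)" by (auto simp: move_mult m1 fun_eq_iff)
  then show ?case using Cons.IH k by simp
qed

lemma cov_aa: "0 \<le> j \<Longrightarrow> j < int M \<Longrightarrow> aa (cov M G d) ((h, j), r) =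
   ((perm G ^^ Suc r) h, (j + (\<Sum>l<Suc r. d ((perm G ^^ l) h))) mod int M)"
  using sp_cov[where j=j and M=M and G=G and d=d and i="Suc r" and h=h] unfolding aa_def by (simp only: fst_conv snd_conv)

lemma cov_ee: "0 \<le> j \<Longrightarrow> j < int M \<Longrightarrow> ee (cov M G d) ((h, j), r) =
   ((perm G ^^ r) h, (j + (\<Sum>l<r. d ((perm G ^^ l) h))) mod int M)"
  using sp_cov[where j=j and M=M and G=G and d=d and i=r and h=h] unfolding ee_def by (simp only: fst_conv snd_conv)

lemma cov_tt: "0 \<le> j \<Longrightarrow> j < int M \<Longrightarrow> tt (cov M G d) ((h, j), r) =
   (inv G ((perm G ^^ Suc r) h), (j + (\<Sum>l<Suc r. d ((perm G ^^ l) h))) mod int M)"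
  unfolding tt_def by (simp only: cov_aa cov_simps)

lemma fam_lifts:
  assumes g: "graphish G" and M: "M > 0" and gs: "good_sec G (secset G (h, r)) (h, r)"
  shows "fam (cov M G d) (secset G (h, r) \<times> UNIV) (set (lifts M (h, r)))"
  unfolding fam_def
proof (intro conjI ballI)
  show "graphish (cov M G d)" using graphish_cov[OF g M] .
next
  fix k assume "k \<in> set (lifts M (h, r))"
  then obtain j where k: "k = ((h, j), r)" and j: "0 \<le> j" "j < int M" unfolding set_lifts by auto
  have hH: "h \<in> hes G" using gs unfolding good_sec_def by simp
  have a: "aa G (h, r) \<notin> secset G (h, r)" and t: "tt G (h, r) \<notin> secset G (h, r)"
    and p: "\<forall>x\<in>hes G. perm G x = h \<longrightarrow> x \<notin> secset G (h, r)"
    using gs unfolding good_sec_def by simp_all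
  have 1: "fst k \<in> hes (cov M G d)" using hH j k by simp
  have 2: "\<forall>i\<le>snd k. (perm (cov M G d) ^^ i) (fst k) \<in> secset G (h, r) \<times> UNIV"
  proof (intro allI impI)
    fix i assume "i \<le> snd k"
    then have "(perm G ^^ i) h \<in> secset G (h, r)" using k unfolding secset_def by auto
    then show "(perm (cov M G d) ^^ i) (fst k) \<in> secset G (h, r) \<times> UNIV"
      using k sp_cov[OF j, where G=G and d=d and i=i and h=h] by simp
  qed
  have 3: "aa (cov M G d) k \<notin> secset G (h, r) \<times> UNIV"
    using a k cov_aa[OF j, of G d h r] by (simp add: aa_def)
  have 4: "tt (cov M G d) k \<notin> secset G (h, r) \<times> UNIV"
    using t k cov_tt[OF j, of G d h r] by (simp add: tt_def aa_def)
  have 5: "\<forall>x\<in>hes (cov M G d). perm (cov M G d) x = fst k \<longrightarrow> x \<notin> secset G (h, r) \<times> UNIV"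
  proof (intro ballI impI)
    fix x assume x: "x \<in> hes (cov M G d)" and px: "perm (cov M G d) x = fst k"
    obtain y i where xy: "x = (y, i)" by (cases x) blast
    have "y \<in> hes G" using x xy by simp
    moreover have "perm G y = h" using px xy k by simp
    ultimately show "x \<notin> secset G (h, r) \<times> UNIV" using p xy by blast
  qed
  show "good_sec (cov M G d) (secset G (h, r) \<times> UNIV) k"
    unfolding good_sec_def using 1 2 3 4 5 by blast
qed


lemma mod_range: "M > 0 \<Longrightarrow> 0 \<le> (x::int) mod int M \<and> x mod int M < int M"
  by simp

lemma single_step_perm:
  assumes g: "graphish G" and M: "M > 0" and gs: "good_sec G (secset G (h, r)) (h, r)"
    and y: "y \<in> hes G" and i: "0 \<le> i" "i < int M"
  shows "(perm (move G h r) y, (i + move_grading G d h r y) mod int M) =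
         cf (cov M G d) (set (lifts M (h, r))) (y, i)"
proof -
  define C where "C = cov M G d"
  define Sl where "Sl = set (lifts M (h, r))"
  define a where "a = (perm G ^^ Suc r) h"
  define e where "e = (perm G ^^ r) h"
  define t where "t = inv G a"
  define p where "p = perm_inv G h"
  define S0 where "S0 = (\<Sum>l<Suc r. d ((perm G ^^ l) h))"
  define Sr where "Sr = (\<Sum>l<r. d ((perm G ^^ l) h))"
  have Fc: "fam C (secset G (h, r) \<times> UNIV) Sl"
    unfolding C_def Sl_def using fam_lifts[OF g M gs] .
  have S0eq: "S0 = Sr + d e" unfolding S0_def Sr_def e_def by simp
  have hH: "h \<in> hes G" using gs unfolding good_sec_def by simp
  have aS: "a \<notin> secset G (h, r)" and tS: "t \<notin> secset G (h, r)"
    and pS: "\<forall>x\<in>hes G. perm G x = h \<longrightarrow> x \<notin> secset G (h, r)"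
    using gs unfolding good_sec_def aa_def tt_def a_def t_def by simp_all
  have hS: "h \<in> secset G (h, r)" unfolding secset_def by force
  have eS: "e \<in> secset G (h, r)" unfolding secset_def e_def by force
  have aH: "a \<in> hes G" unfolding a_def using graphish_pow_closed[OF g hH] .
  have eH: "e \<in> hes G" unfolding e_def using graphish_pow_closed[OF g hH] .
  have tH: "t \<in> hes G" unfolding t_def using graphish_inv[OF g aH] .
  have se: "perm G e = a" unfolding a_def e_def by simp
  have te: "t \<noteq> e" using tS eS by metis
  have ha: "h \<noteq> a" using hS aS by metis
  have ht: "h \<noteq> t" using hS tS by metis
  have bij: "bij_betw (perm G) (hes G) (hes G)" using g unfolding graphish_def by simp
  have hI: "h \<in> perm G ` hes G" using bij hH unfolding bij_betw_def by simp
  have pH: "p \<in> hes G" unfolding p_def perm_inv_def using inv_into_into[OF hI] .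
  have sp: "perm G p = h" unfolding p_def perm_inv_def using f_inv_into_f[OF hI] .
  have puniq: "\<And>z. z \<in> hes G \<Longrightarrow> perm G z = h \<Longrightarrow> z = p"
    using graphish_inj[OF g _ pH] sp by metis
  have mp: "perm (move G h r) = transpose h a \<circ> perm G \<circ> transpose e t"
    unfolding move_perm a_def e_def t_def ..
  have mg: "move_grading G d h r y = (if y = t then - S0 else if y = e then
      (if t \<noteq> p then d t + d e else (d p + S0) + d e) else if y = p then
      (if t \<noteq> p then d p + S0 else - S0) else d y)"
    unfolding move_grading_def Let_def a_def t_def e_def p_def S0_def
    by (simp only: lessThan_Suc_atMost)
  have MM: "int M > 0" using M by simp
  have Lin: "\<And>j. 0 \<le> j \<Longrightarrow> j < int M \<Longrightarrow> ((h, j), r) \<in> Sl"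
    unfolding Sl_def set_lifts by simp
  have ttL: "\<And>j. 0 \<le> j \<Longrightarrow> j < int M \<Longrightarrow> tt C ((h, j), r) = (t, (j + S0) mod int M)"
    unfolding C_def t_def a_def S0_def by (rule cov_tt)
  have eeL: "\<And>j. 0 \<le> j \<Longrightarrow> j < int M \<Longrightarrow> ee C ((h, j), r) = (e, (j + Sr) mod int M)"
    unfolding C_def e_def Sr_def by (rule cov_ee)
  have aaL: "\<And>j. 0 \<le> j \<Longrightarrow> j < int M \<Longrightarrow> aa C ((h, j), r) = (a, (j + S0) mod int M)"
    unfolding C_def a_def S0_def by (rule cov_aa)
  have Sl_form: "\<And>k. k \<in> Sl \<Longrightarrow> \<exists>j. k = ((h, j), r) \<and> 0 \<le> j \<and> j < int M"
    unfolding Sl_def set_lifts by auto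
  have modi: "i mod int M = i" using i by simp
  show ?thesis
  proof (cases "y = t")
    case yt: True
    define j0 where "j0 = (i - S0) mod int M"
    have j0: "0 \<le> j0" "j0 < int M" unfolding j0_def using MM by simp_all
    have "(j0 + S0) mod int M = i" unfolding j0_def by (simp add: mod_add_left_eq modi)
    then have "tt C ((h, j0), r) = (t, i)" using ttL[OF j0] by simp
    then have "cf C Sl (y, i) = (h, j0)" using cf_T[OF Fc Lin[OF j0]] yt by simp
    moreover have "perm (move G h r) y = h" using yt mp se by simp
    moreover have "(i + move_grading G d h r y) mod int M = j0"
      using yt mg unfolding j0_def by simp
    ultimately show ?thesis unfolding C_def Sl_def by simp
  next
    case ynt: False
    show ?thesis
    proof (cases "y = e")
      case ye: True
      define j1 where "j1 = (i - Sr) mod int M"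
      have j1: "0 \<le> j1" "j1 < int M" unfolding j1_def using MM by simp_all
      have "(j1 + Sr) mod int M = i" unfolding j1_def by (simp add: mod_add_left_eq modi)
      then have "ee C ((h, j1), r) = (y, i)" using eeL[OF j1] ye by simp
      then have cf1: "cf C Sl (y, i) = cs C Sl (perm C (t, (j1 + S0) mod int M))"
        using cf_E[OF Fc Lin[OF j1]] ttL[OF j1] by simp
      define j2 where "j2 = ((j1 + S0) mod int M + d t) mod int M"
      have j2: "0 \<le> j2" "j2 < int M" unfolding j2_def using MM by simp_all
      have pc: "perm C (t, (j1 + S0) mod int M) = (perm G t, j2)"
        unfolding C_def j2_def by simp
      show ?thesis
      proof (cases "perm G t = h")
        case True
        have tp: "t = p" using puniq[OF tH True] .
        have "cf C Sl (y, i) = aa C ((h, j2), r)"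
          using cf1 pc True cs_start[OF Fc Lin[OF j2]] by simp
        also have "\<dots> = (a, (j2 + S0) mod int M)" using aaL[OF j2] .
        finally have c: "cf C Sl (y, i) = (a, (j2 + S0) mod int M)" .
        have "perm (move G h r) y = a" using ye mp True ha by simp
        moreover have "(i + move_grading G d h r y) mod int M = (j2 + S0) mod int M"
        proof -
          have "move_grading G d h r y = d p + S0 + d e" using mg ye ynt tp by simp
          then have "(i + move_grading G d h r y) mod int M = (i + d t + S0 + d e) mod int M"
            using tp by (simp add: algebra_simps)
          also have "\<dots> = (i - Sr + S0 + d t + S0) mod int M" using S0eq by (simp add: algebra_simps)
          also have "\<dots> = (j2 + S0) mod int M" unfolding j2_def j1_def
            by (simp add: mod_simps algebra_simps)
          finally show ?thesis .
        qed
        ultimately show ?thesis using c unfolding C_def Sl_def by simp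
      next
        case False
        have tp: "t \<noteq> p" using sp False by metis
        have nS: "\<not> (\<exists>k\<in>Sl. (perm G t, j2) = fst k)" using False Sl_form by fastforce
        have c: "cf C Sl (y, i) = (perm G t, j2)" using cf1 pc cs_other[OF nS] by simp
        have sta: "perm G t \<noteq> a" using graphish_inj[OF g tH eH] se te by metis
        have "perm (move G h r) y = perm G t" using ye mp False sta by simp
        moreover have "(i + move_grading G d h r y) mod int M = j2"
        proof -
          have "move_grading G d h r y = d t + d e" using mg ye ynt tp by simp
          then have "(i + move_grading G d h r y) mod int M = (i - Sr + S0 + d t) mod int M"
            using S0eq by (simp add: algebra_simps)
          also have "\<dots> = j2" unfolding j2_def j1_def
            by (simp add: mod_simps algebra_simps)
          finally show ?thesis .
        qed
        ultimately show ?thesis using c unfolding C_def Sl_def by simp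
      qed
    next
      case yne: False
      have nT: "\<not> (\<exists>k\<in>Sl. (y, i) = tt C k)"
      proof
        assume "\<exists>k\<in>Sl. (y, i) = tt C k"
        then obtain j where "0 \<le> j" "j < int M" "(y, i) = tt C ((h, j), r)" using Sl_form by blast
        then show False using ttL ynt by simp
      qed
      have nE: "\<not> (\<exists>k\<in>Sl. (y, i) = ee C k)"
      proof
        assume "\<exists>k\<in>Sl. (y, i) = ee C k"
        then obtain j where "0 \<le> j" "j < int M" "(y, i) = ee C ((h, j), r)" using Sl_form by blast
        then show False using eeL yne by simp
      qed
      have cf1: "cf C Sl (y, i) = cs C Sl (perm G y, (i + d y) mod int M)"
        using cf_O[OF nT nE] unfolding C_def by simp
      define j4 where "j4 = (i + d y) mod int M"
      have j4: "0 \<le> j4" "j4 < int M" unfolding j4_def using MM by simp_all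
      have tr: "transpose e t y = y" using ynt yne by simp
      show ?thesis
      proof (cases "perm G y = h")
        case True
        have yp: "y = p" using puniq[OF y True] .
        have tp: "t \<noteq> p" using ynt yp by simp
        have c: "cf C Sl (y, i) = (a, (j4 + S0) mod int M)"
          using cf1 True cs_start[OF Fc Lin[OF j4]] aaL[OF j4] unfolding j4_def by simp
        have "perm (move G h r) y = a" using mp tr True by simp
        moreover have "(i + move_grading G d h r y) mod int M = (j4 + S0) mod int M"
        proof -
          have "move_grading G d h r y = d p + S0" using mg ynt yne yp tp by simp
          then show ?thesis unfolding j4_def using yp by (simp add: mod_simps algebra_simps)
        qed
        ultimately show ?thesis using c unfolding C_def Sl_def by simp
      next
        case False
        have nS: "\<not> (\<exists>k\<in>Sl. (perm G y, j4) = fst k)" using False Sl_form by fastforce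
        have c: "cf C Sl (y, i) = (perm G y, j4)" using cf1 cs_other[OF nS] unfolding j4_def by simp
        have sya: "perm G y \<noteq> a" using graphish_inj[OF g y eH] se yne by metis
        have ynp: "y \<noteq> p" using sp False by metis
        have "perm (move G h r) y = perm G y" using mp tr False sya by simp
        moreover have "(i + move_grading G d h r y) mod int M = j4"
          using mg ynt yne ynp unfolding j4_def by simp
        ultimately show ?thesis using c unfolding C_def Sl_def by simp
      qed
    qed
  qed
qed



lemma single_step:
  assumes g: "graphish G" and M: "M > 0" and gs: "good_sec G (secset G (h, r)) (h, r)"
  shows "brauer_eq (cov M (move G h r) (move_grading G d h r)) (moves (cov M G d) (lifts M (h, r)))"
proof -
  have cfC: "\<forall>x\<in>hes (cov M G d). perm (moves (cov M G d) (lifts M (h, r))) x = cf (cov M G d) (set (lifts M (h, r))) x"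
    using moves_cf[OF fam_lifts[OF g M gs] distinct_lifts] .
  have m1: "mult (moves (cov M G d) (lifts M (h, r))) = (\<lambda>_. 1)" by (rule moves_mult1) simp
  show ?thesis unfolding brauer_eq_def
  proof (intro conjI ballI)
    show "hes (cov M (move G h r) (move_grading G d h r)) = hes (moves (cov M G d) (lifts M (h, r)))" by simp
  next
    fix x assume x: "x \<in> hes (cov M (move G h r) (move_grading G d h r))"
    obtain y i where xy: "x = (y, i)" by (cases x) blast
    have y: "y \<in> hes G" and i: "0 \<le> i" "i < int M" using x xy by auto
    have xC: "x \<in> hes (cov M G d)" using x by simp
    show "inv (cov M (move G h r) (move_grading G d h r)) x = inv (moves (cov M G d) (lifts M (h, r))) x"
      using xy by simp
    show "perm (cov M (move G h r) (move_grading G d h r)) x = perm (moves (cov M G d) (lifts M (h, r))) x"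
      using single_step_perm[OF g M gs y i, of d] cfC xC xy by simp
    have "mult (moves (cov M G d) (lifts M (h, r))) x = 1" using m1 by simp
    then show "mult (cov M (move G h r) (move_grading G d h r)) x = mult (moves (cov M G d) (lifts M (h, r))) x"
      by simp
  qed
qed

definition closedG :: "'b brauer \<Rightarrow> bool" where
  "closedG G \<longleftrightarrow> (\<forall>x\<in>hes G. perm G x \<in> hes G \<and> inv G x \<in> hes G)"

lemma beq_refl: "brauer_eq G G"
  unfolding brauer_eq_def by simp

lemma beq_trans: "brauer_eq A B \<Longrightarrow> brauer_eq B C \<Longrightarrow> brauer_eq A C"
  unfolding brauer_eq_def by simp

lemma move_beq:
  assumes be: "brauer_eq G1 G2" and c: "closedG G1" and h: "h \<in> hes G1"
  shows "brauer_eq (move G1 h r) (move G2 h r) \<and> closedG (move G1 h r)"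
proof -
  have H: "hes G2 = hes G1" using be unfolding brauer_eq_def by simp
  have pe: "\<And>x. x \<in> hes G1 \<Longrightarrow> perm G2 x = perm G1 x" using be unfolding brauer_eq_def by simp
  have ie: "\<And>x. x \<in> hes G1 \<Longrightarrow> inv G2 x = inv G1 x" using be unfolding brauer_eq_def by simp
  have me: "\<And>x. x \<in> hes G1 \<Longrightarrow> mult G2 x = mult G1 x" using be unfolding brauer_eq_def by simp
  have pc: "\<And>x. x \<in> hes G1 \<Longrightarrow> perm G1 x \<in> hes G1" using c unfolding closedG_def by simp
  have ic: "\<And>x. x \<in> hes G1 \<Longrightarrow> inv G1 x \<in> hes G1" using c unfolding closedG_def by simp
  have pw: "\<And>i. (perm G2 ^^ i) h = (perm G1 ^^ i) h \<and> (perm G1 ^^ i) h \<in> hes G1"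
  proof -
    fix i show "(perm G2 ^^ i) h = (perm G1 ^^ i) h \<and> (perm G1 ^^ i) h \<in> hes G1"
      by (induction i) (auto simp: h pe pc)
  qed
  define a where "a = (perm G1 ^^ Suc r) h"
  define e where "e = (perm G1 ^^ r) h"
  define t where "t = inv G1 a"
  have aH: "a \<in> hes G1" unfolding a_def using pw by blast
  have eH: "e \<in> hes G1" unfolding e_def using pw by blast
  have tH: "t \<in> hes G1" unfolding t_def using ic[OF aH] .
  have a2: "(perm G2 ^^ Suc r) h = a" unfolding a_def using pw by blast
  have e2: "(perm G2 ^^ r) h = e" unfolding e_def using pw by blast
  have t2: "inv G2 a = t" unfolding t_def using ie[OF aH] .
  have mp1: "perm (move G1 h r) = transpose h a \<circ> perm G1 \<circ> transpose e t"
    unfolding move_perm a_def e_def t_def ..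
  have mp2: "perm (move G2 h r) = transpose h a \<circ> perm G2 \<circ> transpose e t"
    unfolding move_perm a2 e2 t2 ..
  have trH: "\<And>x. x \<in> hes G1 \<Longrightarrow> transpose e t x \<in> hes G1"
    using eH tH by (auto simp: transpose_def)
  have trH2: "\<And>x. x \<in> hes G1 \<Longrightarrow> transpose h a x \<in> hes G1"
    using h aH by (auto simp: transpose_def)
  have ss: "{(perm G2 ^^ i) h | i. i \<le> r} = {(perm G1 ^^ i) h | i. i \<le> r}"
    using pw by simp
  have mm1: "mult (move G1 h r) x = (if x \<in> {(perm G1 ^^ i) h | i. i \<le> r} then mult G1 t else mult G1 x)" for x
    unfolding move_mult a_def t_def by simp
  have mm2: "mult (move G2 h r) x = (if x \<in> {(perm G1 ^^ i) h | i. i \<le> r} then mult G2 t else mult G2 x)" for x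
    using ss unfolding move_mult a2 t2 by simp
  have 1: "brauer_eq (move G1 h r) (move G2 h r)"
    unfolding brauer_eq_def
  proof (intro conjI ballI)
    show "hes (move G1 h r) = hes (move G2 h r)" using H by simp
  next
    fix x assume x: "x \<in> hes (move G1 h r)"
    then have x1: "x \<in> hes G1" by simp
    show "inv (move G1 h r) x = inv (move G2 h r) x" using ie[OF x1] by simp
    show "perm (move G1 h r) x = perm (move G2 h r) x" unfolding mp1 mp2 using pe[OF trH[OF x1]] by simp
    show "mult (move G1 h r) x = mult (move G2 h r) x" unfolding mm1 mm2 using me[OF x1] me[OF tH] by auto
  qed
  have 2: "closedG (move G1 h r)"
    unfolding closedG_def
  proof (intro ballI conjI)
    fix x assume x: "x \<in> hes (move G1 h r)"
    then have x1: "x \<in> hes G1" by simp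
    show "perm (move G1 h r) x \<in> hes (move G1 h r)" unfolding mp1 using trH2[OF pc[OF trH[OF x1]]] by simp
    show "inv (move G1 h r) x \<in> hes (move G1 h r)" using ic[OF x1] by simp
  qed
  show ?thesis using 1 2 by blast
qed

lemma moves_beq:
  "brauer_eq G1 G2 \<Longrightarrow> closedG G1 \<Longrightarrow> \<forall>k\<in>set ys. fst k \<in> hes G1 \<Longrightarrow>
   brauer_eq (moves G1 ys) (moves G2 ys) \<and> closedG (moves G1 ys)"
proof (induction ys arbitrary: G1 G2)
  case Nil then show ?case by simp
next
  case (Cons k ys)
  obtain h r where k: "k = (h, r)" by (cases k) blast
  have h: "h \<in> hes G1" using Cons.prems k by simp
  note mb = move_beq[OF Cons.prems(1,2) h, of r]
  have "\<forall>k\<in>set ys. fst k \<in> hes (move G1 h r)" using Cons.prems by simp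
  then show ?case using Cons.IH[of "move G1 h r" "move G2 h r"] mb k by simp
qed

lemma graphish_closedG: "graphish G \<Longrightarrow> closedG G"
  unfolding closedG_def by (simp add: graphish_closed graphish_inv)

lemma cov_closedG: "graphish G \<Longrightarrow> M > 0 \<Longrightarrow> closedG (cov M G d)"
  by (rule graphish_closedG[OF graphish_cov])

lemma move_graphish:
  assumes g: "graphish G" and h: "h \<in> hes G"
  shows "graphish (move G h r)"
proof -
  define a where "a = (perm G ^^ Suc r) h"
  define e where "e = (perm G ^^ r) h"
  define t where "t = inv G a"
  have aH: "a \<in> hes G" unfolding a_def using graphish_pow_closed[OF g h] .
  have eH: "e \<in> hes G" unfolding e_def using graphish_pow_closed[OF g h] .
  have tH: "t \<in> hes G" unfolding t_def using graphish_inv[OF g aH] .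
  have mp: "perm (move G h r) = transpose h a \<circ> perm G \<circ> transpose e t"
    unfolding move_perm a_def e_def t_def ..
  have b: "bij_betw (perm G) (hes G) (hes G)" using g unfolding graphish_def by simp
  have b1: "bij_betw (transpose e t) (hes G) (hes G)" using eH tH by simp
  have b2: "bij_betw (transpose h a) (hes G) (hes G)" using h aH by simp
  have "bij_betw (transpose h a \<circ> perm G \<circ> transpose e t) (hes G) (hes G)"
    using bij_betw_trans[OF b1 bij_betw_trans[OF b b2]] by (simp add: comp_assoc)
  then show ?thesis using g unfolding graphish_def mp by simp
qed

lemma moves_graphish: "graphish G \<Longrightarrow> \<forall>k\<in>set ys. fst k \<in> hes G \<Longrightarrow> graphish (moves G ys)"
proof (induction ys arbitrary: G)
  case Nil then show ?case by simp
next
  case (Cons k ys)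
  obtain h r where k: "k = (h, r)" by (cases k) blast
  have "graphish (move G h r)" using move_graphish[OF Cons.prems(1)] Cons.prems(2) k by simp
  then show ?case using Cons.IH[of "move G h r"] Cons.prems k by simp
qed

lemma fst_gmoves: "fst (gmoves Gd xs) = moves (fst Gd) xs"
proof (induction xs arbitrary: Gd)
  case Nil then show ?case by simp
next
  case (Cons k xs)
  obtain h r where k: "k = (h, r)" by (cases k) blast
  show ?case using Cons.IH k by (simp add: gmove_def)
qed

lemma gmoves_snoc: "gmoves Gd (xs @ [k]) = gmove (gmoves Gd xs) k"
  by (induction xs arbitrary: Gd) auto



lemma moves_sp:
  assumes F: "fam G B (set (xs @ [k]))" and dx: "distinct (xs @ [k])"
  shows "\<forall>i\<le>Suc (snd k). (perm (moves G xs) ^^ i) (fst k) = (perm G ^^ i) (fst k)"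
proof -
  have F': "fam G B (insert k (set xs))" using F by simp
  have kn: "k \<notin> set xs" using dx by simp
  have IH0: "\<forall>x\<in>hes G. perm (moves G xs) x = cf G (set xs) x"
    using moves_cf fam_mono[OF F'] dx by auto
  show ?thesis using step_sp[OF F' kn IH0] by blast
qed

lemma good_sec_prefix:
  assumes F: "fam G B (set (xs @ [k]))" and dx: "distinct (xs @ [k])"
  shows "good_sec (moves G xs) (secset (moves G xs) k) k"
proof -
  note sp = moves_sp[OF F dx, rule_format]
  have kS: "k \<in> set (xs @ [k])" by simp
  have g: "graphish G" using fam_g[OF F] .
  have hH: "fst k \<in> hes G" using fam_hH[OF F kS] .
  have ss: "secset (moves G xs) k = secset G k"
  proof -
    have "\<And>x. (\<exists>i. x = (perm (moves G xs) ^^ i) (fst k) \<and> i \<le> snd k) \<longleftrightarrow> (\<exists>i. x = (perm G ^^ i) (fst k) \<and> i \<le> snd k)"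
      using sp by (metis le_SucI)
    then show ?thesis unfolding secset_def by blast
  qed
  have aa: "aa (moves G xs) k = aa G k" unfolding aa_def using sp[of "Suc (snd k)"] by simp
  have tt: "tt (moves G xs) k = tt G k" unfolding tt_def aa by simp
  have sB: "secset G k \<subseteq> B" using secset_B[OF F kS] .
  have 1: "fst k \<in> hes (moves G xs)" using hH by simp
  have 2: "\<forall>i\<le>snd k. (perm (moves G xs) ^^ i) (fst k) \<in> secset (moves G xs) k"
    unfolding secset_def by blast
  have "aa G k \<notin> secset G k" using aa_nB[OF F kS] sB by (meson subsetD)
  then have 3: "aa (moves G xs) k \<notin> secset (moves G xs) k" unfolding aa ss .
  have "tt G k \<notin> secset G k" using tt_nB[OF F kS] sB by (meson subsetD)
  then have 4: "tt (moves G xs) k \<notin> secset (moves G xs) k" unfolding tt ss .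
  have 5: "\<forall>x\<in>hes (moves G xs). perm (moves G xs) x = fst k \<longrightarrow> x \<notin> secset (moves G xs) k"
  proof (intro ballI impI notI)
    fix x assume x: "x \<in> hes (moves G xs)" and px: "perm (moves G xs) x = fst k"
      and xs: "x \<in> secset (moves G xs) k"
    have "x \<in> secset G k" using xs unfolding ss .
    then obtain i where i: "i \<le> snd k" "x = (perm G ^^ i) (fst k)" unfolding secset_def by blast
    have "x = (perm (moves G xs) ^^ i) (fst k)" using sp i by simp
    then have "(perm (moves G xs) ^^ Suc i) (fst k) = fst k" using px by simp
    moreover have "(perm (moves G xs) ^^ Suc i) (fst k) = (perm G ^^ Suc i) (fst k)"
      using sp[of "Suc i"] i by (simp del: funpow.simps)
    ultimately have e0: "(perm G ^^ Suc i) (fst k) = fst k" by simp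
    then have e: "(perm G ^^ Suc i) (fst k) = (perm G ^^ 0) (fst k)" by simp
    show False
    proof (cases "Suc i \<le> snd k")
      case True
      then show False using U1[OF F kS kS True, of 0] e by simp
    next
      case False
      then have "Suc i = Suc (snd k)" using i by simp
      then have "aa G k = fst k" using e by (simp add: aa_def del: funpow.simps)
      then show False using aa_nB[OF F kS] start_B[OF F kS] by metis
    qed
  qed
  show ?thesis unfolding good_sec_def using 1 2 3 4 5 by blast
qed

lemma graded_main:
  "fam G B (set xs) \<Longrightarrow> distinct xs \<Longrightarrow> M > 0 \<Longrightarrow>
   brauer_eq (cov M (moves G xs) (snd (gmoves (G, d) xs))) (moves (cov M G d) (concat (map (lifts M) xs)))"
proof (induction xs rule: rev_induct)
  case Nil
  then show ?case by (simp add: beq_refl)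
next
  case (snoc k xs)
  obtain h r where k: "k = (h, r)" by (cases k) blast
  have F: "fam G B (set (xs @ [k]))" and dx: "distinct (xs @ [k])" and M: "M > 0" using snoc.prems by auto
  have F0: "fam G B (set xs)" using fam_mono[OF F] by auto
  have dx0: "distinct xs" using dx by simp
  have IH: "brauer_eq (cov M (moves G xs) (snd (gmoves (G, d) xs))) (moves (cov M G d) (concat (map (lifts M) xs)))"
    using snoc.IH F0 dx0 M by blast
  define Gj where "Gj = moves G xs"
  define dj where "dj = snd (gmoves (G, d) xs)"
  have gm: "gmoves (G, d) xs = (Gj, dj)" unfolding Gj_def dj_def using fst_gmoves[of "(G, d)" xs]
    by (metis fst_conv prod.collapse)
  have gm2: "gmoves (G, d) (xs @ [k]) = (move Gj h r, move_grading Gj dj h r)"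
    unfolding gmoves_snoc gm k by (simp add: gmove_def)
  have g: "graphish G" using fam_g[OF F] .
  have keys: "\<forall>k\<in>set xs. fst k \<in> hes G" using fam_hH[OF F0] by blast
  have gj: "graphish Gj" unfolding Gj_def using moves_graphish[OF g keys] .
  have gsj: "good_sec Gj (secset Gj (h, r)) (h, r)" unfolding Gj_def using good_sec_prefix[OF F dx] k by simp
  have s1: "brauer_eq (cov M (move Gj h r) (move_grading Gj dj h r)) (moves (cov M Gj dj) (lifts M (h, r)))"
    using single_step[OF gj M gsj] .
  have IH': "brauer_eq (cov M Gj dj) (moves (cov M G d) (concat (map (lifts M) xs)))"
    using IH unfolding Gj_def dj_def .
  have hH: "h \<in> hes G" using fam_hH[OF F, of k] k by simp
  have keys2: "\<forall>k'\<in>set (lifts M (h, r)). fst k' \<in> hes (cov M Gj dj)"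
    unfolding set_lifts using hH unfolding Gj_def by auto
  have s2: "brauer_eq (moves (cov M Gj dj) (lifts M (h, r))) (moves (moves (cov M G d) (concat (map (lifts M) xs))) (lifts M (h, r)))"
    using moves_beq[OF IH' cov_closedG[OF gj M] keys2] by blast
  have "moves G (xs @ [k]) = move Gj h r" unfolding Gj_def moves_snoc k by simp
  moreover have "snd (gmoves (G, d) (xs @ [k])) = move_grading Gj dj h r" using gm2 by simp
  moreover have "moves (cov M G d) (concat (map (lifts M) (xs @ [k]))) =
      moves (moves (cov M G d) (concat (map (lifts M) xs))) (lifts M (h, r))"
    by (simp add: moves_append k)
  ultimately show ?case using beq_trans[OF s1 s2] by simp
qed



lemma good_sec_max:
  assumes bg: "brauer_graph G" and st: "iota_stable G H'" and k: "(h, r) \<in> max_sectors G H'"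
  shows "good_sec G H' (h, r)"
proof -
  have g: "graphish G" using brauer_graphish[OF bg] .
  have hH: "h \<in> hes G" and secs: "\<forall>i\<le>r. (perm G ^^ i) h \<in> H'"
    and an: "(perm G ^^ Suc r) h \<notin> H'" and pn: "perm_inv G h \<notin> H'"
    using k unfolding max_sectors_def max_sector_def is_sector_def by simp_all
  have aH: "(perm G ^^ Suc r) h \<in> hes G" using graphish_pow_closed[OF g hH] .
  have tn: "inv G ((perm G ^^ Suc r) h) \<notin> H'"
  proof
    assume "inv G ((perm G ^^ Suc r) h) \<in> H'"
    then have "inv G (inv G ((perm G ^^ Suc r) h)) \<in> H'" using st unfolding iota_stable_def by blast
    then show False using graphish_invinv[OF g aH] an by simp
  qed
  have pre: "\<forall>x\<in>hes G. perm G x = h \<longrightarrow> x \<notin> H'"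
  proof (intro ballI impI)
    fix x assume x: "x \<in> hes G" and px: "perm G x = h"
    have inj: "inj_on (perm G) (hes G)" using g unfolding graphish_def bij_betw_def by simp
    have "perm_inv G h = x" unfolding perm_inv_def using inv_into_f_f[OF inj x] px by simp
    then show "x \<notin> H'" using pn by simp
  qed
  show ?thesis unfolding good_sec_def aa_def tt_def using hH secs an tn pre by simp
qed

lemma good_sec_cov:
  assumes g: "graphish G" and M: "M > 0" and gs: "good_sec G B (h, r)" and j: "0 \<le> j" "j < int M"
  shows "good_sec (cov M G d) (B \<times> {0..<int M}) ((h, j), r)"
proof -
  have hH: "h \<in> hes G" and secs: "\<forall>i\<le>r. (perm G ^^ i) h \<in> B"
    and an: "aa G (h, r) \<notin> B" and tn: "tt G (h, r) \<notin> B"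
    and pre: "\<forall>x\<in>hes G. perm G x = h \<longrightarrow> x \<notin> B"
    using gs unfolding good_sec_def by simp_all
  have 1: "fst ((h, j), r) \<in> hes (cov M G d)" using hH j by simp
  have 2: "\<forall>i\<le>snd ((h, j), r). (perm (cov M G d) ^^ i) (fst ((h, j), r)) \<in> B \<times> {0..<int M}"
    using secs by (simp add: sp_cov[OF j] mod_range[OF M])
  have 3: "aa (cov M G d) ((h, j), r) \<notin> B \<times> {0..<int M}"
    using an unfolding aa_def by (simp add: sp_cov[OF j] del: funpow.simps)
  have 4: "tt (cov M G d) ((h, j), r) \<notin> B \<times> {0..<int M}"
    using tn unfolding tt_def aa_def by (simp add: sp_cov[OF j] del: funpow.simps)
  have 5: "\<forall>x\<in>hes (cov M G d). perm (cov M G d) x = fst ((h, j), r) \<longrightarrow> x \<notin> B \<times> {0..<int M}"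
  proof (intro ballI impI)
    fix x assume x: "x \<in> hes (cov M G d)" and px: "perm (cov M G d) x = fst ((h, j), r)"
    obtain y i where xy: "x = (y, i)" by (cases x) blast
    have "y \<in> hes G" using x xy by simp
    moreover have "perm G y = h" using px xy by simp
    ultimately show "x \<notin> B \<times> {0..<int M}" using pre xy by simp
  qed
  show ?thesis unfolding good_sec_def using 1 2 3 4 5 by blast
qed

lemma perm_inv_cov:
  assumes g: "graphish G" and M: "M > 0" and hH: "h \<in> hes G" and j: "0 \<le> j" "j < int M"
  shows "perm_inv (cov M G d) (h, j) = (perm_inv G h, (j - d (perm_inv G h)) mod int M)"
proof -
  have bij: "bij_betw (perm G) (hes G) (hes G)" using g unfolding graphish_def by simp
  have hI: "h \<in> perm G ` hes G" using bij hH unfolding bij_betw_def by simp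
  define p where "p = perm_inv G h"
  have pH: "p \<in> hes G" unfolding p_def perm_inv_def using inv_into_into[OF hI] .
  have sp: "perm G p = h" unfolding p_def perm_inv_def using f_inv_into_f[OF hI] .
  have injC: "inj_on (perm (cov M G d)) (hes (cov M G d))"
    using graphish_cov[OF g M] unfolding graphish_def bij_betw_def by simp
  have xC: "(p, (j - d p) mod int M) \<in> hes (cov M G d)" using pH M by simp
  have "((j - d p) mod int M + d p) mod int M = (j - d p + d p) mod int M"
    by (simp only: mod_add_left_eq)
  also have "\<dots> = j" using j by simp
  finally have "perm (cov M G d) (p, (j - d p) mod int M) = (h, j)" using sp by simp
  then have "inv_into (hes (cov M G d)) (perm (cov M G d)) (h, j) = (p, (j - d p) mod int M)"
    using inv_into_f_eq[OF injC xC] by simp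
  then show ?thesis unfolding perm_inv_def p_def .
qed

lemma max_sectors_cov:
  assumes g: "graphish G" and M: "M > 0"
  shows "max_sectors (cov M G d) (H' \<times> {0..<int M}) =
    {((h, j), r) | h j r. (h, r) \<in> max_sectors G H' \<and> 0 \<le> j \<and> j < int M}"
proof (rule set_eqI)
  fix z :: "('a \<times> int) \<times> nat"
  obtain h j r where z: "z = ((h, j), r)" by (cases z) auto
  show "z \<in> max_sectors (cov M G d) (H' \<times> {0..<int M}) \<longleftrightarrow>
    z \<in> {((h, j), r) | h j r. (h, r) \<in> max_sectors G H' \<and> 0 \<le> j \<and> j < int M}"
  proof (cases "h \<in> hes G \<and> 0 \<le> j \<and> j < int M")
    case False
    then show ?thesis unfolding z max_sectors_def max_sector_def is_sector_def by auto
  next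
    case True
    then have hH: "h \<in> hes G" and j: "0 \<le> j" "j < int M" by auto
    have A: "\<And>i. ((perm (cov M G d) ^^ i) (h, j) \<in> H' \<times> {0..<int M}) = ((perm G ^^ i) h \<in> H')"
      by (simp add: sp_cov[OF j] mod_range[OF M])
    have B: "(perm_inv (cov M G d) (h, j) \<in> H' \<times> {0..<int M}) = (perm_inv G h \<in> H')"
      by (simp add: perm_inv_cov[OF g M hH j] mod_range[OF M])
    show ?thesis unfolding z max_sectors_def max_sector_def is_sector_def
      using hH j by (simp add: A B del: funpow.simps)
  qed
qed

lemma set_concat_lifts:
  "set (concat (map (lifts M) xs)) = {((h, j), r) | h j r. (h, r) \<in> set xs \<and> 0 \<le> j \<and> j < int M}"
proof (rule set_eqI)
  fix z :: "('a \<times> int) \<times> nat"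
  obtain h j r where z: "z = ((h, j), r)" by (cases z) auto
  have "z \<in> set (concat (map (lifts M) xs)) \<longleftrightarrow> (\<exists>k\<in>set xs. z \<in> set (lifts M k))" by simp
  also have "\<dots> \<longleftrightarrow> (\<exists>k\<in>set xs. fst k = h \<and> snd k = r \<and> 0 \<le> j \<and> j < int M)"
    unfolding z set_lifts by auto
  also have "\<dots> \<longleftrightarrow> (h, r) \<in> set xs \<and> 0 \<le> j \<and> j < int M"
  proof
    assume "\<exists>k\<in>set xs. fst k = h \<and> snd k = r \<and> 0 \<le> j \<and> j < int M"
    then obtain k where "k \<in> set xs" "fst k = h" "snd k = r" "0 \<le> j" "j < int M" by blast
    then show "(h, r) \<in> set xs \<and> 0 \<le> j \<and> j < int M" by (metis prod.collapse)
  next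
    assume "(h, r) \<in> set xs \<and> 0 \<le> j \<and> j < int M"
    then show "\<exists>k\<in>set xs. fst k = h \<and> snd k = r \<and> 0 \<le> j \<and> j < int M" by force
  qed
  also have "\<dots> \<longleftrightarrow> z \<in> {((h, j), r) | h j r. (h, r) \<in> set xs \<and> 0 \<le> j \<and> j < int M}"
    unfolding z by blast
  finally show "z \<in> set (concat (map (lifts M) xs)) \<longleftrightarrow> z \<in> {((h, j), r) | h j r. (h, r) \<in> set xs \<and> 0 \<le> j \<and> j < int M}" .
qed

lemma distinct_concat_lifts:
  assumes dx: "distinct xs" and M: "M > 0"
  shows "distinct (concat (map (lifts M) xs))"
proof (rule distinct_concat)
  have mem: "((fst k, 0), snd k) \<in> set (lifts M k)" for k using M unfolding set_lifts by simp
  have "inj_on (lifts M) (set xs)"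
  proof (rule inj_onI)
    fix k k' assume "lifts M k = lifts M k'"
    then have "((fst k, 0), snd k) \<in> set (lifts M k')" using mem[of k] by simp
    then show "k = k'" unfolding set_lifts by (simp add: prod_eq_iff)
  qed
  then show "distinct (map (lifts M) xs)" using dx by (simp add: distinct_map)
next
  fix ys assume "ys \<in> set (map (lifts M) xs)"
  then show "distinct ys" using distinct_lifts by auto
next
  fix ys zs assume "ys \<in> set (map (lifts M) xs)" "zs \<in> set (map (lifts M) xs)" "ys \<noteq> zs"
  then obtain k k' where k: "ys = lifts M k" "zs = lifts M k'" "k \<noteq> k'" by auto
  show "set ys \<inter> set zs = {}"
  proof (rule ccontr)
    assume "set ys \<inter> set zs \<noteq> {}"
    then obtain w where "w \<in> set (lifts M k)" "w \<in> set (lifts M k')" using k by auto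
    then have "fst k = fst k' \<and> snd k = snd k'" unfolding set_lifts by auto
    then show False using k(3) by (simp add: prod_eq_iff)
  qed
qed

lemma moves_same:
  assumes F1: "fam G B (set xs)" and F2: "fam G B (set ys)" and d1: "distinct xs" and d2: "distinct ys"
    and eq: "set xs = set ys" and m: "mult G = (\<lambda>_. 1)"
  shows "brauer_eq (moves G xs) (moves G ys)"
proof -
  have c1: "\<forall>x\<in>hes G. perm (moves G xs) x = cf G (set xs) x" using moves_cf[OF F1 d1] .
  have c2: "\<forall>x\<in>hes G. perm (moves G ys) x = cf G (set ys) x" using moves_cf[OF F2 d2] .
  have m1: "mult (moves G xs) = (\<lambda>_. 1)" using moves_mult1[OF m] .
  have m2: "mult (moves G ys) = (\<lambda>_. 1)" using moves_mult1[OF m] .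
  show ?thesis unfolding brauer_eq_def
  proof (intro conjI ballI)
    show "hes (moves G xs) = hes (moves G ys)" by simp
  next
    fix x assume x: "x \<in> hes (moves G xs)"
    then have xH: "x \<in> hes G" by simp
    show "inv (moves G xs) x = inv (moves G ys) x" by simp
    show "perm (moves G xs) x = perm (moves G ys) x" using c1 c2 xH eq by simp
    have "mult (moves G xs) x = 1" using m1 by simp
    moreover have "mult (moves G ys) x = 1" using m2 by simp
    ultimately show "mult (moves G xs) x = mult (moves G ys) x" by simp
  qed
qed

theorem proposition2p19:
  fixes G :: "'a brauer" and d :: "'a \<Rightarrow> int" and H' :: "'a set"
    and xs :: "('a \<times> nat) list" and ys :: "(('a \<times> int) \<times> nat) list"
  assumes "graded_brauer_graph G d"
    and "iota_stable G H'"
    and "distinct xs" and "set xs = max_sectors G H'"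
    and "distinct ys"
    and "set ys = max_sectors (covering G d) (H' \<times> {0..<int (mbar G)})"
  shows "brauer_eq (covering (fst (gmoves (G, d) xs)) (snd (gmoves (G, d) xs)))
                   (moves (covering G d) ys)"
proof -
  have bg: "brauer_graph G" using assms(1) unfolding graded_brauer_graph_def by simp
  have g: "graphish G" using brauer_graphish[OF bg] .
  define M where "M = mbar G"
  have fin: "finite (mult G ` hes G)" using bg unfolding brauer_graph_def by simp
  have n0: "0 \<notin> mult G ` hes G" using bg unfolding brauer_graph_def by auto
  have M: "M > 0" unfolding M_def mbar_def using Lcm_0_iff_nat[OF fin] n0 by (simp add: gr0_conv_Suc)
  have F: "fam G H' (set xs)" unfolding fam_def
    using g good_sec_max[OF bg assms(2)] assms(4) by auto
  have dx: "distinct xs" using assms(3) .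
  have e1: "covering (fst (gmoves (G, d) xs)) (snd (gmoves (G, d) xs)) = cov M (moves G xs) (snd (gmoves (G, d) xs))"
    unfolding covering_cov fst_gmoves M_def using moves_mbar[OF bg F dx] by simp
  have e2: "covering G d = cov M G d" unfolding covering_cov M_def ..
  define Y where "Y = concat (map (lifts M) xs)"
  have s1: "brauer_eq (cov M (moves G xs) (snd (gmoves (G, d) xs))) (moves (cov M G d) Y)"
    unfolding Y_def using graded_main[OF F dx M] .
  define Sc where "Sc = max_sectors (cov M G d) (H' \<times> {0..<int M})"
  have Sc: "Sc = {((h, j), r) | h j r. (h, r) \<in> max_sectors G H' \<and> 0 \<le> j \<and> j < int M}"
    unfolding Sc_def using max_sectors_cov[OF g M] .
  have setY: "set Y = Sc" unfolding Y_def Sc set_concat_lifts assms(4) ..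
  have setys: "set ys = Sc" unfolding Sc_def using assms(6) unfolding e2 M_def .
  have FC: "fam (cov M G d) (H' \<times> {0..<int M}) Sc"
    unfolding fam_def
  proof (intro conjI ballI)
    show "graphish (cov M G d)" using graphish_cov[OF g M] .
  next
    fix kc assume "kc \<in> Sc"
    then obtain h j r where kc: "kc = ((h, j), r)" and hr: "(h, r) \<in> max_sectors G H'" and j: "0 \<le> j" "j < int M"
      unfolding Sc by blast
    show "good_sec (cov M G d) (H' \<times> {0..<int M}) kc"
      unfolding kc using good_sec_cov[OF g M good_sec_max[OF bg assms(2) hr] j] .
  qed
  have dY: "distinct Y" unfolding Y_def using distinct_concat_lifts[OF dx M] .
  have s2: "brauer_eq (moves (cov M G d) Y) (moves (cov M G d) ys)"
    using moves_same[of "cov M G d" "H' \<times> {0..<int M}" Y ys] FC setY setys dY assms(5) by simp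
  show ?thesis unfolding e1 e2 using beq_trans[OF s1 s2] .
qed


end
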